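(* Let $G=\{G_n\}_{n\in\mathbb{Z}}$ be a sequence with values in $\mathbb{D}$ and $G_n=0$ for $n<n_0$ (some $n_0\in\mathbb{Z}$). Suppose that for fixed $m\in\mathbb{Z}$ and $p\in\mathbb{N}$ one has $\sum_{s=m+1}^{m+p}|G_s|\leqslant\frac12$. Then there is an absolute constant $C$ such that for all $z\in\mathbb{T}$, $$|\mathfrak{r}(z,G^{\leqslant m+p})-\mathfrak{r}(z,G^{\leqslant m})|\leqslant C\sum_{s=m+1}^{m+p}|G_s|.$$
   Context: $\mathbb{T}$, $\mathbb{D}$ denote the unit circle and open unit disc. $G^{\leqslant M}=G\chi_{n\leqslant M}$ (finitely supported here). For a finitely supported $H$ with values in $\mathbb{D}$: $\widetilde X_n(z)=I$ below the support, $\widetilde X_n=(1-|H_n|^2)^{-1/2}\begin{pmatrix}1&\overline{H_n}z^{-n}\\ H_nz^n&1\end{pmatrix}\widetilde X_{n-1}$, and above the support $\widetilde X_n=\begin{pmatrix}\mathfrak{a}(z,H)&\mathfrak{b}^{( * )}(z,H)\\ \mathfrak{b}(z,H)&\mathfrak{a}^{( * )}(z,H)\end{pmatrix}$ with $f^{( * )}(z)=\overline{f(\bar z^{-1})}$; $\mathfrak{r}(z,H)=\mathfrak{b}(z,H)/\mathfrak{a}^{( * )}(z,H)$. *)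

theory Defs
  imports "HOL-Analysis.Analysis"
begin

(* 2x2 complex matrices as tuples (x11, x12, x21, x22) *)
type_synonym cmat2 = "complex \<times> complex \<times> complex \<times> complex"

definition mmul2 :: "cmat2 \<Rightarrow> cmat2 \<Rightarrow> cmat2" where
  "mmul2 A B = (case A of (a11, a12, a21, a22) \<Rightarrow> case B of (b11, b12, b21, b22) \<Rightarrow>
     (a11*b11 + a12*b21, a11*b12 + a12*b22, a21*b11 + a22*b21, a21*b12 + a22*b22))"

definition id2 :: cmat2 where "id2 = (1, 0, 0, 1)"

definition nlft_step :: "complex \<Rightarrow> int \<Rightarrow> complex \<Rightarrow> cmat2" where
  "nlft_step h n z = (let c = complex_of_real (1 / sqrt (1 - (cmod h)^2)) in
     (c, c * cnj h * z powi (-n), c * h * z powi n, c))"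

(* product of the factors for indices L, L+1, ..., L+k-1, later indices multiplied on the left *)
fun nlft_prod :: "(int \<Rightarrow> complex) \<Rightarrow> int \<Rightarrow> nat \<Rightarrow> complex \<Rightarrow> cmat2" where
  "nlft_prod H L 0 z = id2"
| "nlft_prod H L (Suc k) z = mmul2 (nlft_step (H (L + int k)) (L + int k) z) (nlft_prod H L k z)"

definition supp_seq :: "(int \<Rightarrow> complex) \<Rightarrow> int set" where
  "supp_seq H = {n. H n \<noteq> 0}"

(* the matrix X_n(z) for n above the (finite) support of H *)
definition nlft_X :: "complex \<Rightarrow> (int \<Rightarrow> complex) \<Rightarrow> cmat2" where
  "nlft_X z H = (if supp_seq H = {} then id2
     else nlft_prod H (Min (supp_seq H)) (nat (Max (supp_seq H) - Min (supp_seq H) + 1)) z)"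

definition nlft_a :: "complex \<Rightarrow> (int \<Rightarrow> complex) \<Rightarrow> complex" where
  "nlft_a z H = fst (nlft_X z H)"

definition nlft_b :: "complex \<Rightarrow> (int \<Rightarrow> complex) \<Rightarrow> complex" where
  "nlft_b z H = fst (snd (snd (nlft_X z H)))"

definition star_fun :: "(complex \<Rightarrow> complex) \<Rightarrow> complex \<Rightarrow> complex" where
  "star_fun f z = cnj (f (inverse (cnj z)))"

definition nlft_r :: "complex \<Rightarrow> (int \<Rightarrow> complex) \<Rightarrow> complex" where
  "nlft_r z H = nlft_b z H / star_fun (\<lambda>w. nlft_a w H) z"

definition trunc_le :: "(int \<Rightarrow> complex) \<Rightarrow> int \<Rightarrow> int \<Rightarrow> complex" where
  "trunc_le G M = (\<lambda>n. if n \<le> M then G n else 0)"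

end

theory Submission imports Defs begin

lemma mmul2_assoc: "mmul2 (mmul2 A B) C = mmul2 A (mmul2 B C)"
  by (cases A; cases B; cases C) (simp add: mmul2_def algebra_simps)

lemma mmul2_id_left[simp]: "mmul2 id2 A = A"
  by (cases A) (simp add: mmul2_def id2_def)

lemma mmul2_id_right[simp]: "mmul2 A id2 = A"
  by (cases A) (simp add: mmul2_def id2_def)

lemma step0[simp]: "nlft_step 0 n z = id2"
  by (simp add: nlft_step_def id2_def)

lemma prod_zero: "(\<forall>i<k. H (L + int i) = 0) \<Longrightarrow> nlft_prod H L k z = id2"
  by (induction k) auto

lemma prod_split: "nlft_prod H L (i + j) z = mmul2 (nlft_prod H (L + int i) j z) (nlft_prod H L i z)"
  by (induction j) (simp_all add: mmul2_assoc algebra_simps)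

lemma prod_cong: "(\<forall>i<k. H (L + int i) = H' (L + int i)) \<Longrightarrow> nlft_prod H L k z = nlft_prod H' L k z"
  by (induction k) auto

lemma X_eq_prod:
  assumes supp: "\<forall>n. H n \<noteq> 0 \<longrightarrow> L \<le> n \<and> n < L + int k"
  shows "nlft_X z H = nlft_prod H L k z"
proof (cases "supp_seq H = {}")
  case True
  then have "nlft_prod H L k z = id2" by (intro prod_zero) (auto simp: supp_seq_def)
  then show ?thesis using True by (simp add: nlft_X_def)
next
  case False
  define S where "S = supp_seq H"
  have Ssub: "S \<subseteq> {L..<L + int k}" using supp by (auto simp: S_def supp_seq_def)
  hence fin: "finite S" by (meson finite_atLeastLessThan_int finite_subset)
  define mn where "mn = Min S"
  define mx where "mx = Max S"
  have ne: "S \<noteq> {}" using False S_def by simp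
  have mnS: "mn \<in> S" and mxS: "mx \<in> S" using fin ne by (auto simp: mn_def mx_def)
  have mnmx: "mn \<le> mx" using fin ne mnS by (simp add: mx_def)
  have Lmn: "L \<le> mn" and mxk: "mx < L + int k" using mnS mxS Ssub by auto
  have below: "H n = 0" if "n < mn" for n
    using that fin unfolding mn_def S_def supp_seq_def
    by (metis (mono_tags, lifting) Min_le S_def fin leD mem_Collect_eq supp_seq_def)
  have above: "H n = 0" if "n > mx" for n
    using that fin unfolding mx_def
    by (metis (mono_tags, lifting) Max_ge S_def leD mem_Collect_eq supp_seq_def)
  define i where "i = nat (mn - L)"
  define j where "j = nat (mx - mn + 1)"
  define l where "l = k - i - j"
  have kk: "k = i + (j + l)" using Lmn mnmx mxk unfolding i_def j_def l_def by linarith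
  have Li: "L + int i = mn" using Lmn i_def by simp
  have Lij: "mn + int j = mx + 1" using mnmx j_def by simp
  have "nlft_prod H L k z = mmul2 (nlft_prod H (L + int i) (j + l) z) (nlft_prod H L i z)"
    using kk prod_split by metis
  also have "nlft_prod H L i z = id2"
    by (rule prod_zero) (auto intro!: below simp: i_def)
  also have "nlft_prod H (L + int i) (j + l) z
      = mmul2 (nlft_prod H (L + int i + int j) l z) (nlft_prod H (L + int i) j z)"
    by (rule prod_split)
  also have "nlft_prod H (L + int i + int j) l z = id2"
    by (rule prod_zero) (auto intro!: above simp: Li Lij)
  finally have "nlft_prod H L k z = nlft_prod H mn j z" by (simp add: Li)
  then show ?thesis using False by (simp add: nlft_X_def S_def mn_def mx_def j_def)
qed


lemma X_step:
  assumes up: "\<forall>n\<ge>s. H n = 0" and low: "\<forall>n<n0. H n = 0"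
  shows "nlft_X z (H(s:=h)) = mmul2 (nlft_step h s z) (nlft_X z H)"
proof -
  define L where "L = min n0 s"
  define k where "k = nat (s - L)"
  have Lk: "L + int k = s" using L_def k_def by simp
  have "nlft_X z (H(s:=h)) = nlft_prod (H(s:=h)) L (Suc k) z"
  proof (rule X_eq_prod, intro allI impI)
    fix n assume "(H(s:=h)) n \<noteq> 0"
    hence "n = s \<or> (n < s \<and> n0 \<le> n)" using up low by (metis fun_upd_other not_less)
    thus "L \<le> n \<and> n < L + int (Suc k)" using Lk L_def by auto
  qed
  also have "\<dots> = mmul2 (nlft_step h s z) (nlft_prod (H(s:=h)) L k z)"
    by (simp add: Lk)
  also have "nlft_prod (H(s:=h)) L k z = nlft_prod H L k z"
    by (rule prod_cong) (use Lk in auto)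
  also have "nlft_prod H L k z = nlft_X z H"
  proof (rule X_eq_prod[symmetric], intro allI impI)
    fix n assume "H n \<noteq> 0"
    hence "n < s \<and> n0 \<le> n" using up low by (metis not_less)
    thus "L \<le> n \<and> n < L + int k" using Lk L_def by auto
  qed
  finally show ?thesis .
qed

lemma cnj_circle: "cmod z = 1 \<Longrightarrow> cnj z = inverse z"
proof -
  assume "cmod z = 1"
  hence "z * cnj z = 1" using complex_norm_square[of z] by simp
  thus ?thesis by (metis inverse_unique)
qed

definition good :: "cmat2 \<Rightarrow> bool" where
  "good M \<longleftrightarrow> (\<exists>a b. M = (a, cnj b, b, cnj a) \<and> cmod a ^2 - cmod b ^2 = 1)"

lemma good_id: "good id2"
  unfolding good_def id2_def by (rule exI[of _ 1], rule exI[of _ 0]) simp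

lemma step_form:
  assumes "cmod z = 1"
  shows "nlft_step h n z = (complex_of_real (1 / sqrt (1 - (cmod h)^2)),
     cnj (complex_of_real (1 / sqrt (1 - (cmod h)^2)) * h * z powi n),
     complex_of_real (1 / sqrt (1 - (cmod h)^2)) * h * z powi n,
     cnj (complex_of_real (1 / sqrt (1 - (cmod h)^2))))"
  using assms by (simp add: nlft_step_def Let_def cnj_circle power_int_minus power_int_inverse)

lemma good_step:
  assumes z: "cmod z = 1" and h: "cmod h < 1"
  shows "good (nlft_step h n z)"
proof -
  define c where "c = 1 / sqrt (1 - (cmod h)^2)"
  have "(cmod h)^2 < 1^2" by (rule power_strict_mono) (use h in auto)
  hence pos: "1 - (cmod h)^2 > 0" by simp
  have cc: "c^2 * (1 - (cmod h)^2) = 1" using pos by (simp add: c_def power_divide)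
  have "cmod (complex_of_real c) ^2 - cmod (complex_of_real c * h * z powi n) ^2 = c^2 * (1 - (cmod h)^2)"
    using z by (simp add: norm_mult norm_power_int power_mult_distrib algebra_simps)
  with cc show ?thesis unfolding good_def step_form[OF z] c_def[symmetric]
    by (intro exI[of _ "complex_of_real c"] exI[of _ "complex_of_real c * h * z powi n"]) simp
qed

lemma good_mul:
  assumes "good A" "good B" shows "good (mmul2 A B)"
proof -
  obtain a1 b1 where A: "A = (a1, cnj b1, b1, cnj a1)" and n1: "cmod a1 ^2 - cmod b1 ^2 = 1"
    using assms(1) good_def by auto
  obtain a2 b2 where B: "B = (a2, cnj b2, b2, cnj a2)" and n2: "cmod a2 ^2 - cmod b2 ^2 = 1"
    using assms(2) good_def by auto
  define a where "a = a1 * a2 + cnj b1 * b2"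
  define b where "b = b1 * a2 + cnj a1 * b2"
  have M: "mmul2 A B = (a, cnj b, b, cnj a)"
    by (simp add: A B mmul2_def a_def b_def algebra_simps)
  have e1: "a1 * cnj a1 - b1 * cnj b1 = 1"
    using n1 complex_norm_square[of a1] complex_norm_square[of b1]
    by (metis of_real_1 of_real_diff)
  have e2: "a2 * cnj a2 - b2 * cnj b2 = 1"
    using n2 complex_norm_square[of a2] complex_norm_square[of b2]
    by (metis of_real_1 of_real_diff)
  have "a * cnj a - b * cnj b = (a1 * cnj a1 - b1 * cnj b1) * (a2 * cnj a2 - b2 * cnj b2)"
    by (simp add: a_def b_def algebra_simps)
  hence "a * cnj a - b * cnj b = 1" using e1 e2 by simp
  hence "complex_of_real (cmod a ^2 - cmod b ^2) = 1"
    by (simp only: of_real_diff complex_norm_square)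
  hence "cmod a ^2 - cmod b ^2 = 1" using of_real_eq_1_iff by blast
  with M show ?thesis unfolding good_def by blast
qed

lemma good_prod:
  assumes "cmod z = 1" "\<forall>n. cmod (H n) < 1"
  shows "good (nlft_prod H L k z)"
  by (induction k) (use assms in \<open>auto intro: good_id good_mul good_step\<close>)

lemma good_X:
  assumes "cmod z = 1" "\<forall>n. cmod (H n) < 1"
  shows "good (nlft_X z H)"
  using good_prod[OF assms] good_id by (simp add: nlft_X_def)

lemma r_circle:
  assumes "cmod z = 1"
  shows "nlft_r z H = fst (snd (snd (nlft_X z H))) / cnj (fst (nlft_X z H))"
proof -
  have "inverse (cnj z) = z" using cnj_circle[OF assms] by simp
  thus ?thesis by (simp add: nlft_r_def star_fun_def nlft_a_def nlft_b_def)
qed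


lemma key:
  fixes a b h w :: complex and c :: real
  assumes ab: "cmod a ^2 - cmod b^2 = 1" and w: "cmod w = 1" and h: "cmod h \<le> 1/2" and c: "c > 0"
  shows "cmod ((c*h*w*a + c*b) / cnj (c*a + c*cnj h * cnj w * b) - b / cnj a) \<le> 2 * cmod h"
proof -
  have "0 \<le> cmod b ^2" by simp
  hence "1 \<le> cmod a ^2" using ab by linarith
  hence "1^2 \<le> cmod a ^2" by simp
  hence a1: "cmod a \<ge> 1" using power2_le_imp_le[of 1 "cmod a"] by simp
  hence a0: "a \<noteq> 0" by auto
  define D where "D = cnj a + h * w * cnj b"
  have "cmod b ^2 \<le> cmod a ^2" using ab by linarith
  hence bb: "cmod b \<le> cmod a" using power2_le_imp_le[of "cmod b" "cmod a"] by simp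
  have "cmod D \<ge> cmod (cnj a) - cmod (h*w*cnj b)" unfolding D_def by (rule norm_diff_ineq)
  also have "cmod (h*w*cnj b) = cmod h * cmod b" using w by (simp add: norm_mult)
  finally have "cmod D \<ge> cmod a - cmod h * cmod b" by simp
  moreover have "cmod h * cmod b \<le> 1/2 * cmod a" using h bb by (meson mult_mono norm_ge_zero order_trans)
  ultimately have Dge: "cmod D \<ge> cmod a / 2" by simp
  hence D0: "D \<noteq> 0" using a1 by auto
  have ac: "a * cnj a - b * cnj b = 1"
  proof -
    have "complex_of_real (cmod a ^2 - cmod b^2) = a * cnj a - b * cnj b"
      by (simp only: of_real_diff complex_norm_square)
    with ab show ?thesis by simp
  qed
  have cnjeq: "cnj (c*a + c*cnj h * cnj w * b) = c * D" by (simp add: D_def algebra_simps)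
  have num: "c*h*w*a + c*b = c * (h*w*a + b)" by (simp add: algebra_simps)
  have c0: "complex_of_real c \<noteq> 0" using c by simp
  have "(c*h*w*a + c*b) / cnj (c*a + c*cnj h * cnj w * b) - b / cnj a = (h*w*a + b)/D - b / cnj a"
    unfolding cnjeq num using c0 by simp
  also have "\<dots> = h * w * (a * cnj a - b * cnj b) / (cnj a * D)"
  proof -
    have ca0: "cnj a \<noteq> 0" using a0 by simp
    have "(h*w*a + b)/D - b / cnj a = ((h*w*a + b) * cnj a - b * D) / (cnj a * D)"
      using ca0 D0 by (simp add: diff_frac_eq mult.commute)
    also have "(h*w*a + b) * cnj a - b * D = h * w * (a * cnj a - b * cnj b)"
      unfolding D_def by (simp add: algebra_simps)
    finally show ?thesis .
  qed
  also have "\<dots> = h * w / (cnj a * D)" using ac by simp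
  finally have eq: "(c*h*w*a + c*b) / cnj (c*a + c*cnj h * cnj w * b) - b / cnj a = h * w / (cnj a * D)" .
  have "cmod (h * w / (cnj a * D)) = cmod h / (cmod a * cmod D)" using w by (simp add: norm_mult norm_divide)
  also have "\<dots> \<le> cmod h / (1/2)"
  proof -
    have "cmod a * cmod D \<ge> 1 * (1/2)" using a1 Dge by (intro mult_mono) auto
    hence P: "1/2 \<le> cmod a * cmod D" by simp
    have P2: "0 < cmod a * cmod D * (1/2)" using P by linarith
    show ?thesis by (rule divide_left_mono[OF P norm_ge_zero P2])
  qed
  finally show ?thesis using eq by simp
qed

lemma r_step:
  assumes z: "cmod z = 1" and hn: "\<forall>n. cmod (H n) < 1" and hh: "cmod h \<le> 1/2"
    and up: "\<forall>n\<ge>s. H n = 0" and low: "\<forall>n<n0. H n = 0"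
  shows "cmod (nlft_r z (H(s:=h)) - nlft_r z H) \<le> 2 * cmod h"
proof -
  obtain a b where X: "nlft_X z H = (a, cnj b, b, cnj a)" and ab: "cmod a ^2 - cmod b ^2 = 1"
    using good_X[OF z hn] good_def by auto
  define c where "c = 1 / sqrt (1 - (cmod h)^2)"
  have "(cmod h)^2 < 1^2" by (rule power_strict_mono) (use hh in auto)
  hence c: "c > 0" by (simp add: c_def)
  define w where "w = z powi s"
  have w: "cmod w = 1" using z by (simp add: w_def norm_power_int)
  have X': "nlft_X z (H(s:=h)) = mmul2 (nlft_step h s z) (a, cnj b, b, cnj a)"
    using X_step[OF up low] X by simp
  have "fst (nlft_X z (H(s:=h))) = c*a + c*cnj h * cnj w * b"
    "fst (snd (snd (nlft_X z (H(s:=h))))) = c*h*w*a + c*b"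
    unfolding X' step_form[OF z] c_def[symmetric] w_def[symmetric] by (simp_all add: mmul2_def)
  then show ?thesis using key[OF ab w hh c] by (simp add: r_circle[OF z] X)
qed

lemma telescope:
  assumes z: "cmod z = 1" and hn: "\<forall>n. cmod (G n) < 1" and low: "\<forall>n<n0. G n = 0"
  shows "(\<forall>s\<in>{m+1..m + int p}. cmod (G s) \<le> 1/2) \<Longrightarrow>
    cmod (nlft_r z (trunc_le G (m + int p)) - nlft_r z (trunc_le G m))
          \<le> 2 * (\<Sum>s\<in>{m+1..m + int p}. cmod (G s))"
proof (induction p)
  case 0
  then show ?case by simp
next
  case (Suc p)
  define s where "s = m + int p + 1"
  have IH: "cmod (nlft_r z (trunc_le G (m + int p)) - nlft_r z (trunc_le G m))
          \<le> 2 * (\<Sum>s\<in>{m+1..m + int p}. cmod (G s))"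
    using Suc by auto
  have tr: "trunc_le G (m + int (Suc p)) = (trunc_le G (m + int p))(s := G s)"
    by (auto simp: trunc_le_def s_def fun_eq_iff)
  have hs: "cmod (G s) \<le> 1/2" using Suc.prems s_def by auto
  have st: "cmod (nlft_r z (trunc_le G (m + int (Suc p))) - nlft_r z (trunc_le G (m + int p))) \<le> 2 * cmod (G s)"
    unfolding tr
  proof (rule r_step[OF z _ hs])
    show "\<forall>n. cmod (trunc_le G (m + int p) n) < 1" using hn by (simp add: trunc_le_def)
    show "\<forall>n\<ge>s. trunc_le G (m + int p) n = 0" by (simp add: trunc_le_def s_def)
    show "\<forall>n<n0. trunc_le G (m + int p) n = 0" using low by (simp add: trunc_le_def)
  qed
  have iv: "{m+1..m + int (Suc p)} = insert s {m+1..m + int p}" by (auto simp: s_def)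
  have sm: "(\<Sum>t\<in>{m+1..m + int (Suc p)}. cmod (G t)) = cmod (G s) + (\<Sum>t\<in>{m+1..m + int p}. cmod (G t))"
    unfolding iv by (subst sum.insert) (auto simp: s_def)
  have "cmod (nlft_r z (trunc_le G (m + int (Suc p))) - nlft_r z (trunc_le G m))
     \<le> cmod (nlft_r z (trunc_le G (m + int (Suc p))) - nlft_r z (trunc_le G (m + int p)))
       + cmod (nlft_r z (trunc_le G (m + int p)) - nlft_r z (trunc_le G m))"
    using norm_triangle_ineq[of "nlft_r z (trunc_le G (m + int (Suc p))) - nlft_r z (trunc_le G (m + int p))"
       "nlft_r z (trunc_le G (m + int p)) - nlft_r z (trunc_le G m)"] by simp
  then show ?case using st IH sm by linarith
qed

theorem lemma4p3:
  "\<exists>C::real. \<forall>(G::int \<Rightarrow> complex) (m::int) (p::nat).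
     (\<forall>n. cmod (G n) < 1) \<longrightarrow> (\<exists>n0. \<forall>n<n0. G n = 0) \<longrightarrow>
     (\<Sum>s\<in>{m+1..m + int p}. cmod (G s)) \<le> 1/2 \<longrightarrow>
     (\<forall>z. cmod z = 1 \<longrightarrow>
        cmod (nlft_r z (trunc_le G (m + int p)) - nlft_r z (trunc_le G m))
          \<le> C * (\<Sum>s\<in>{m+1..m + int p}. cmod (G s)))"
proof (intro exI[of _ 2] allI impI)
  fix G :: "int \<Rightarrow> complex" and m :: int and p :: nat and z :: complex
  assume hn: "\<forall>n. cmod (G n) < 1" and ex: "\<exists>n0. \<forall>n<n0. G n = 0"
    and sum: "(\<Sum>s\<in>{m+1..m + int p}. cmod (G s)) \<le> 1/2" and z: "cmod z = 1"
  obtain n0 where low: "\<forall>n<n0. G n = 0" using ex by blast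
  have "\<forall>s\<in>{m+1..m + int p}. cmod (G s) \<le> 1/2"
  proof
    fix s assume "s \<in> {m+1..m + int p}"
    hence "cmod (G s) \<le> (\<Sum>s\<in>{m+1..m + int p}. cmod (G s))"
      by (intro member_le_sum) auto
    thus "cmod (G s) \<le> 1/2" using sum by simp
  qed
  then show "cmod (nlft_r z (trunc_le G (m + int p)) - nlft_r z (trunc_le G m))
          \<le> 2 * (\<Sum>s\<in>{m+1..m + int p}. cmod (G s))"
    by (rule telescope[OF z hn low])
qed

end
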